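(* Let $P_c$ and $P_d$ be the programs defined in the context, built with the same ordering $\alpha$ of $X$, and let $A'\subseteq A^+$. Then $P_d$ has a supported model $M$ with $A'=\{\vec a\in A^+: a\in M\}$ if and only if $P_c$ has a supported model $N$ with $A'=\{\vec a\in A^+: a\in N\}$.
   Context: Delete-relaxed planning. Let $X$ be a finite set of atomic propositions, $A^+$ a finite set of actions, and $G\subseteq X$. Each action $\vec a\in A^+$ has $pre(\vec a),add(\vec a)\subseteq X$; there are no delete effects and the initial state is $\emptyset$. For each action $\vec a$ there is an action atom $a$. Further atoms are: - $\mathrm{dep}(p,q)$ for $p,q\in X$; - $\mathrm{ws}(a,p)$ for actions $\vec a$ and $p\in X$; - a special atom $f$. All these atoms are pairwise distinct and distinct from $X$. Logic programs. A normal rule has the form $h\leftarrow b_1,\dots,b_n,\mathtt{not}\,c_1,\dots,\mathtt{not}\,c_m$, and a choice rule has the form $\{h\}\leftarrow(\text{same body})$; the body may be empty. An interpretation $I$ satisfies a body if all $b_i\in I$ and no $c_j\in I$. $I$ is a model if every normal rule whose body $I$ satisfies has its head in $I$. The supporting rules w.r.t. $I$ are: - the normal rules whose body $I$ satisfies; - the choice rules whose body $I$ satisfies and whose head is in $I$. A model $I$ is supported if $I$ equals the set of heads of its supporting rules. Vertex elimination. For a digraph $(V',E')$ and vertex $v$: - the fill-in is $F(v)=\{(x,y):(x,v),(v,y)\in E',x\ne y\}$; - the $v$-elimination graph deletes $v$ together with its incident arcs and adds $F(v)$. For an ordering $\alpha:\{1,\dots,n\}\to V$ of a digraph $\mathcal{G}$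 with $n$ vertices, set $\mathcal{G}_0=\mathcal{G}$ and let $\mathcal{G}_i$ be the $\alpha(i)$-elimination graph of $\mathcal{G}_{i-1}$ for $i=1,\dots,n-1$. Let $F_{i-1}(\alpha(i))$ be the fill-in of $\alpha(i)$ in $\mathcal{G}_{i-1}$. The vertex elimination graph $\mathcal{G}^*_\alpha=(V,E^* )$ has as arcs the original arcs together with all $F_{i-1}(\alpha(i))$. Let $E=\{(p,q)\in X\times X:\exists \vec a\in A^+,\ p\in add(\vec a),\ q\in pre(\vec a)\}$ and $\mathcal{G}=(X,E)$. Let $n=|X|$, fix an ordering $\alpha$ of $X$, and let $E^*$ be the arc set of $\mathcal{G}^*_\alpha$. Define the rule groups: - (C5) $\mathrm{dep}(p,q)\leftarrow\mathrm{dep}(p,\alpha(i)),\mathrm{dep}(\alpha(i),q)$ for each $i\in\{1,\dots,n-1\}$ and each $(p,q)\in F_{i-1}(\alpha(i))$; - (C6) $f\leftarrow \mathrm{dep}(p,q),\mathrm{dep}(q,p),\mathtt{not}\,f$ for all $p,q\in X$ (possibly $p=q$) with $(p,q),(q,p)\in E^*$. Program $P_c$ (causal) consists of (C5), (C6), and: - (C1) $\{\mathrm{dep}(p,q)\}\leftarrow q$ for each $(p,q)\in E$; - (C2) $\{\mathrm{ws}(a,p)\}\leftarrow \mathrm{dep}(p,q_1),\dots,\mathrm{dep}(p,q_k)$ for each $\vec a\in A^+$ and $p\in add(\vec a)$, where $pre(\vec a)=\{q_1,\dots,q_k\}$; - (C3) $p\leftarrow \mathrm{ws}(a,p)$ and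 $a\leftarrow\mathrm{ws}(a,p)$ for each $\vec a\in A^+$ and $p\in add(\vec a)$; - (C4) $g\leftarrow\mathtt{not}\,g$ for each $g\in G$. Program $P_d$ (diagnostic) consists of (C5), (C6), and: - (D1) $\{p\}\leftarrow$ (empty body) for each $p\in X$; - (D2) $\{\mathrm{ws}(a,p)\}\leftarrow p$ for each $\vec a\in A^+$ and $p\in add(\vec a)$; - (D3) $f\leftarrow p,\mathtt{not}\,\mathrm{ws}(a_1,p),\dots,\mathtt{not}\,\mathrm{ws}(a_m,p),\mathtt{not}\,f$ for each $p\in X$, where $\vec a_1,\dots,\vec a_m$ are all actions $\vec a$ with $p\in add(\vec a)$; - (D4) $\mathrm{dep}(p,q)\leftarrow\mathrm{ws}(a,p)$ for each $\vec a\in A^+$, $p\in add(\vec a)$ and $q\in pre(\vec a)$; - (D5) $q\leftarrow\mathrm{dep}(p,q)$ for each $(p,q)\in E$; - (D6) $a\leftarrow\mathrm{ws}(a,p)$ for each $\vec a\in A^+$ and $p\in add(\vec a)$; - (D7) $g\leftarrow\mathtt{not}\,g$ for each $g\in G$. *)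

theory Defs
  imports Main
begin

datatype ('x, 'a) atom = Prop 'x | Act 'a | Dep 'x 'x | WS 'a 'x | FAtom

datatype ('x, 'a) rule =
    Normal "('x,'a) atom" "('x,'a) atom set" "('x,'a) atom set"
  | Choice "('x,'a) atom" "('x,'a) atom set" "('x,'a) atom set"

fun head :: "('x,'a) rule \<Rightarrow> ('x,'a) atom" where
  "head (Normal h _ _) = h" | "head (Choice h _ _) = h"

fun body_sat :: "('x,'a) atom set \<Rightarrow> ('x,'a) rule \<Rightarrow> bool" where
  "body_sat I (Normal _ B C) = (B \<subseteq> I \<and> C \<inter> I = {})"
| "body_sat I (Choice _ B C) = (B \<subseteq> I \<and> C \<inter> I = {})"

fun is_normal :: "('x,'a) rule \<Rightarrow> bool" where
  "is_normal (Normal _ _ _) = True" | "is_normal (Choice _ _ _) = False"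

definition is_model :: "('x,'a) rule set \<Rightarrow> ('x,'a) atom set \<Rightarrow> bool" where
  "is_model P I \<longleftrightarrow> (\<forall>r\<in>P. is_normal r \<and> body_sat I r \<longrightarrow> head r \<in> I)"

definition supporting_rules :: "('x,'a) rule set \<Rightarrow> ('x,'a) atom set \<Rightarrow> ('x,'a) rule set" where
  "supporting_rules P I =
     {r\<in>P. is_normal r \<and> body_sat I r} \<union> {r\<in>P. \<not> is_normal r \<and> body_sat I r \<and> head r \<in> I}"

definition supported_model :: "('x,'a) rule set \<Rightarrow> ('x,'a) atom set \<Rightarrow> bool" where
  "supported_model P I \<longleftrightarrow> is_model P I \<and> I = head ` supporting_rules P I"

definition fill_in :: "'x \<Rightarrow> ('x \<times> 'x) set \<Rightarrow> ('x \<times> 'x) set" where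
  "fill_in v E' = {(x,y). (x,v) \<in> E' \<and> (v,y) \<in> E' \<and> x \<noteq> y}"

definition elim :: "'x \<Rightarrow> ('x \<times> 'x) set \<Rightarrow> ('x \<times> 'x) set" where
  "elim v E' = {(x,y) \<in> E'. x \<noteq> v \<and> y \<noteq> v} \<union> fill_in v E'"

fun elim_seq :: "('x \<times> 'x) set \<Rightarrow> (nat \<Rightarrow> 'x) \<Rightarrow> nat \<Rightarrow> ('x \<times> 'x) set" where
  "elim_seq E \<alpha> 0 = E"
| "elim_seq E \<alpha> (Suc i) = elim (\<alpha> (Suc i)) (elim_seq E \<alpha> i)"

definition fill_step :: "('x \<times> 'x) set \<Rightarrow> (nat \<Rightarrow> 'x) \<Rightarrow> nat \<Rightarrow> ('x \<times> 'x) set" where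
  "fill_step E \<alpha> i = fill_in (\<alpha> i) (elim_seq E \<alpha> (i - 1))"

definition elim_arcs :: "('x \<times> 'x) set \<Rightarrow> (nat \<Rightarrow> 'x) \<Rightarrow> nat \<Rightarrow> ('x \<times> 'x) set" where
  "elim_arcs E \<alpha> n = E \<union> (\<Union>i\<in>{1..n-1}. fill_step E \<alpha> i)"

definition dep_graph :: "'a set \<Rightarrow> ('a \<Rightarrow> 'x set) \<Rightarrow> ('a \<Rightarrow> 'x set) \<Rightarrow> ('x \<times> 'x) set" where
  "dep_graph Acts pre add = {(p,q). \<exists>a\<in>Acts. p \<in> add a \<and> q \<in> pre a}"

definition rules_C5 :: "'x set \<Rightarrow> 'a set \<Rightarrow> ('a \<Rightarrow> 'x set) \<Rightarrow> ('a \<Rightarrow> 'x set) \<Rightarrow> (nat \<Rightarrow> 'x)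
    \<Rightarrow> ('x,'a) rule set" where
  "rules_C5 X Acts pre add \<alpha> =
     {Normal (Dep p q) {Dep p (\<alpha> i), Dep (\<alpha> i) q} {} | i p q.
        i \<in> {1..card X - 1} \<and> (p,q) \<in> fill_step (dep_graph Acts pre add) \<alpha> i}"

definition rules_C6 :: "'x set \<Rightarrow> 'a set \<Rightarrow> ('a \<Rightarrow> 'x set) \<Rightarrow> ('a \<Rightarrow> 'x set) \<Rightarrow> (nat \<Rightarrow> 'x)
    \<Rightarrow> ('x,'a) rule set" where
  "rules_C6 X Acts pre add \<alpha> =
     (let Es = elim_arcs (dep_graph Acts pre add) \<alpha> (card X) in
      {Normal FAtom {Dep p q, Dep q p} {FAtom} | p q.
        p \<in> X \<and> q \<in> X \<and> (p,q) \<in> Es \<and> (q,p) \<in> Es})"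

definition goal_rules :: "'x set \<Rightarrow> ('x,'a) rule set" where
  "goal_rules G = {Normal (Prop g) {} {Prop g} | g. g \<in> G}"

definition P_c :: "'x set \<Rightarrow> 'a set \<Rightarrow> ('a \<Rightarrow> 'x set) \<Rightarrow> ('a \<Rightarrow> 'x set) \<Rightarrow> 'x set
    \<Rightarrow> (nat \<Rightarrow> 'x) \<Rightarrow> ('x,'a) rule set" where
  "P_c X Acts pre add G \<alpha> =
     rules_C5 X Acts pre add \<alpha> \<union> rules_C6 X Acts pre add \<alpha>
   \<union> {Choice (Dep p q) {Prop q} {} | p q. (p,q) \<in> dep_graph Acts pre add}
   \<union> {Choice (WS a p) (Dep p ` pre a) {} | a p. a \<in> Acts \<and> p \<in> add a}
   \<union> {Normal (Prop p) {WS a p} {} | a p. a \<in> Acts \<and> p \<in> add a}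
   \<union> {Normal (Act a) {WS a p} {} | a p. a \<in> Acts \<and> p \<in> add a}
   \<union> goal_rules G"

definition P_d :: "'x set \<Rightarrow> 'a set \<Rightarrow> ('a \<Rightarrow> 'x set) \<Rightarrow> ('a \<Rightarrow> 'x set) \<Rightarrow> 'x set
    \<Rightarrow> (nat \<Rightarrow> 'x) \<Rightarrow> ('x,'a) rule set" where
  "P_d X Acts pre add G \<alpha> =
     rules_C5 X Acts pre add \<alpha> \<union> rules_C6 X Acts pre add \<alpha>
   \<union> {Choice (Prop p) {} {} | p. p \<in> X}
   \<union> {Choice (WS a p) {Prop p} {} | a p. a \<in> Acts \<and> p \<in> add a}
   \<union> {Normal FAtom {Prop p} ({WS a p | a. a \<in> Acts \<and> p \<in> add a} \<union> {FAtom}) | p. p \<in> X}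
   \<union> {Normal (Dep p q) {WS a p} {} | a p q. a \<in> Acts \<and> p \<in> add a \<and> q \<in> pre a}
   \<union> {Normal (Prop q) {Dep p q} {} | p q. (p,q) \<in> dep_graph Acts pre add}
   \<union> {Normal (Act a) {WS a p} {} | a p. a \<in> Acts \<and> p \<in> add a}
   \<union> goal_rules G"

end

theory Submission
  imports Defs
begin


lemma elim_seq_sub: "E \<subseteq> X \<times> X \<Longrightarrow> elim_seq E \<alpha> j \<subseteq> X \<times> X"
  by (induction j) (auto simp: elim_def fill_in_def)

lemma fill_step_sub: "1 \<le> i \<Longrightarrow> fill_step E \<alpha> i \<subseteq> elim_seq E \<alpha> i"
proof -
  assume "1 \<le> i"
  then obtain k where k: "i = Suc k" by (cases i) auto
  show ?thesis by (auto simp: k fill_step_def elim_def)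
qed

lemma elim_seq_arcs: "j \<le> n - 1 \<Longrightarrow> elim_seq E \<alpha> j \<subseteq> elim_arcs E \<alpha> n"
proof (induction j)
  case 0
  then show ?case by (auto simp: elim_arcs_def)
next
  case (Suc j)
  have "fill_in (\<alpha> (Suc j)) (elim_seq E \<alpha> j) = fill_step E \<alpha> (Suc j)"
    by (simp add: fill_step_def)
  moreover have "fill_step E \<alpha> (Suc j) \<subseteq> elim_arcs E \<alpha> n"
  proof -
    have "Suc j \<in> {1..n-1}" using Suc.prems by auto
    then show ?thesis unfolding elim_arcs_def by blast
  qed
  ultimately show ?case using Suc by (auto simp: elim_def)
qed

lemma persist:
  assumes "(a,b) \<in> elim_seq E \<alpha> t" "t \<le> t'"
    "\<And>s. t < s \<Longrightarrow> s \<le> t' \<Longrightarrow> \<alpha> s \<noteq> a \<and> \<alpha> s \<noteq> b"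
  shows "(a,b) \<in> elim_seq E \<alpha> t'"
  using assms
proof (induction t')
  case 0
  then show ?case by simp
next
  case (Suc t')
  show ?case
  proof (cases "t = Suc t'")
    case True
    then show ?thesis using Suc.prems by simp
  next
    case False
    then have "(a,b) \<in> elim_seq E \<alpha> t'" using Suc by auto
    moreover have "\<alpha> (Suc t') \<noteq> a \<and> \<alpha> (Suc t') \<noteq> b" using Suc.prems False by auto
    ultimately show ?thesis by (auto simp: elim_def)
  qed
qed

context
  fixes E :: "('x \<times> 'x) set" and X :: "'x set" and \<alpha> :: "nat \<Rightarrow> 'x" and n :: nat
    and R :: "('x \<times> 'x) set"
  assumes bij: "bij_betw \<alpha> {1..n} X" and EX: "E \<subseteq> X \<times> X"
    and C6: "\<And>p q. (p,q) \<in> R \<Longrightarrow> (q,p) \<in> R \<Longrightarrow> (p,q) \<in> elim_arcs E \<alpha> n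
               \<Longrightarrow> (q,p) \<in> elim_arcs E \<alpha> n \<Longrightarrow> False"
    and CL: "\<And>i p q. i \<in> {1..n-1} \<Longrightarrow> (p,q) \<in> fill_step E \<alpha> i \<Longrightarrow> (p, \<alpha> i) \<in> R
               \<Longrightarrow> (\<alpha> i, q) \<in> R \<Longrightarrow> (p,q) \<in> R"
    and SUP: "\<And>p q. (p,q) \<in> R \<Longrightarrow> (p,q) \<in> E \<or>
               (\<exists>i\<in>{1..n-1}. (p,q) \<in> fill_step E \<alpha> i \<and> (p, \<alpha> i) \<in> R \<and> (\<alpha> i, q) \<in> R)"
begin

definition idx :: "'x \<Rightarrow> nat" where "idx = inv_into {1..n} \<alpha>"

lemma idx_in: "p \<in> X \<Longrightarrow> idx p \<in> {1..n} \<and> \<alpha> (idx p) = p"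
  unfolding idx_def using bij
  by (metis bij_betw_def f_inv_into_f inv_into_into)

lemma idx_alpha: "i \<in> {1..n} \<Longrightarrow> idx (\<alpha> i) = i"
  unfolding idx_def using bij bij_betw_inv_into_left by fastforce

lemma alpha_in: "i \<in> {1..n} \<Longrightarrow> \<alpha> i \<in> X"
  using bij bij_betwE by blast

lemma alpha_inj: "i \<in> {1..n} \<Longrightarrow> k \<in> {1..n} \<Longrightarrow> \<alpha> i = \<alpha> k \<Longrightarrow> i = k"
  using bij by (metis idx_alpha)

lemma finX: "finite X"
  using bij bij_betw_finite by blast

lemma R_sub: "R \<subseteq> X \<times> X"
proof
  fix x assume "x \<in> R"
  then obtain p q where x: "x = (p,q)" and pq: "(p,q) \<in> R" by (cases x) auto
  from SUP[OF pq] show "x \<in> X \<times> X"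
  proof
    assume "(p,q) \<in> E" then show ?thesis using EX x by auto
  next
    assume "\<exists>i\<in>{1..n-1}. (p,q) \<in> fill_step E \<alpha> i \<and> (p, \<alpha> i) \<in> R \<and> (\<alpha> i, q) \<in> R"
    then obtain i where "i \<in> {1..n-1}" "(p,q) \<in> fill_step E \<alpha> i" by blast
    then have "(p,q) \<in> elim_seq E \<alpha> i" using fill_step_sub by fastforce
    then show ?thesis using elim_seq_sub[OF EX] x by blast
  qed
qed

lemma R_arcs: "R \<subseteq> elim_arcs E \<alpha> n"
proof
  fix x assume "x \<in> R"
  then obtain p q where x: "x = (p,q)" and pq: "(p,q) \<in> R" by (cases x) auto
  from SUP[OF pq] show "x \<in> elim_arcs E \<alpha> n"
    unfolding elim_arcs_def using x by blast
qed

lemma noloop: "(p,p) \<notin> R"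
  using C6 R_arcs by blast

definition V :: "nat \<Rightarrow> 'x set" where "V m = {p \<in> X. m \<le> idx p}"
definition Rm :: "nat \<Rightarrow> ('x \<times> 'x) set" where "Rm m = R \<inter> (V m \<times> V m)"

lemma finite_Rm: "finite (Rm m)"
proof -
  have "Rm m \<subseteq> X \<times> X" using R_sub unfolding Rm_def by auto
  then show ?thesis using finX finite_subset by blast
qed

lemma Rm_rtrancl_V: "(a,b) \<in> (Rm m)\<^sup>* \<Longrightarrow> a \<in> V m \<Longrightarrow> b \<in> V m"
  by (induction rule: rtrancl_induct) (auto simp: Rm_def)

lemma unfold_out:
  assumes j: "1 \<le> j" "j \<le> n - 1" and acT: "acyclic (Rm (Suc j))"
  shows "(\<alpha> j, w) \<in> R \<Longrightarrow> w \<in> X \<Longrightarrow> j < idx w \<Longrightarrow>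
    \<exists>w'. (\<alpha> j, w') \<in> R \<and> (\<alpha> j, w') \<in> elim_seq E \<alpha> (j-1) \<and> (w', w) \<in> (Rm (Suc j))\<^sup>*"
proof (induction w rule: wf_induct_rule[OF finite_acyclic_wf[OF finite_Rm acT]])
  case (1 w)
  note IH = "1.IH" and prems = "1.prems"
  have jn: "j \<in> {1..n}" using j by auto
  have wn: "idx w \<in> {1..n}" "\<alpha> (idx w) = w" using idx_in[OF prems(2)] by auto
  have avoid: "\<alpha> s \<noteq> \<alpha> j \<and> \<alpha> s \<noteq> w" if "0 < s" "s \<le> j - 1" for s
  proof -
    have sn: "s \<in> {1..n}" using that j by auto
    show ?thesis using alpha_inj[OF sn jn] alpha_inj[OF sn wn(1)] wn(2) that prems(3) by auto
  qed
  show ?case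
  proof (cases "(\<alpha> j, w) \<in> elim_seq E \<alpha> (j-1)")
    case True
    then show ?thesis using prems by blast
  next
    case notin: False
    from SUP[OF prems(1)] show ?thesis
    proof
      assume "(\<alpha> j, w) \<in> E"
      then have "(\<alpha> j, w) \<in> elim_seq E \<alpha> 0" by simp
      from persist[OF this, of "j-1"] avoid have "(\<alpha> j, w) \<in> elim_seq E \<alpha> (j-1)" by auto
      with notin show ?thesis by blast
    next
      assume "\<exists>i\<in>{1..n-1}. (\<alpha> j, w) \<in> fill_step E \<alpha> i \<and> (\<alpha> j, \<alpha> i) \<in> R \<and> (\<alpha> i, w) \<in> R"
      then obtain i where i: "i \<in> {1..n-1}" "(\<alpha> j, w) \<in> fill_step E \<alpha> i"
        "(\<alpha> j, \<alpha> i) \<in> R" "(\<alpha> i, w) \<in> R" by blast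
      have "\<not> i < j"
      proof
        assume ij: "i < j"
        have "(\<alpha> j, w) \<in> elim_seq E \<alpha> i" using i fill_step_sub by fastforce
        from persist[OF this, of "j-1"] avoid ij have "(\<alpha> j, w) \<in> elim_seq E \<alpha> (j-1)" by auto
        with notin show False by blast
      qed
      moreover have "i \<noteq> j" using i(3) noloop by auto
      ultimately have ij: "j < i" by auto
      have inn: "i \<in> {1..n}" using i(1) by auto
      have ai: "\<alpha> i \<in> X" "idx (\<alpha> i) = i" using alpha_in[OF inn] idx_alpha[OF inn] by auto
      have "(\<alpha> i, w) \<in> Rm (Suc j)"
        using i(4) ai ij prems unfolding Rm_def V_def by auto
      from IH[OF this i(3) ai(1)] ai ij obtain w' where
        w': "(\<alpha> j, w') \<in> R" "(\<alpha> j, w') \<in> elim_seq E \<alpha> (j-1)" "(w', \<alpha> i) \<in> (Rm (Suc j))\<^sup>*"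
        by auto
      then show ?thesis using \<open>(\<alpha> i, w) \<in> Rm (Suc j)\<close> by (meson rtrancl.rtrancl_into_rtrancl)
    qed
  qed
qed


lemma unfold_in:
  assumes j: "1 \<le> j" "j \<le> n - 1" and acT: "acyclic (Rm (Suc j))"
  shows "(u, \<alpha> j) \<in> R \<Longrightarrow> u \<in> X \<Longrightarrow> j < idx u \<Longrightarrow>
    \<exists>u'. (u', \<alpha> j) \<in> R \<and> (u', \<alpha> j) \<in> elim_seq E \<alpha> (j-1) \<and> (u, u') \<in> (Rm (Suc j))\<^sup>*"
proof (induction u rule: wf_induct_rule[OF finite_acyclic_wf_converse[OF finite_Rm acT]])
  case (1 u)
  note IH = "1.IH" and prems = "1.prems"
  have jn: "j \<in> {1..n}" using j by auto
  have un: "idx u \<in> {1..n}" "\<alpha> (idx u) = u" using idx_in[OF prems(2)] by auto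
  have avoid: "\<alpha> s \<noteq> u \<and> \<alpha> s \<noteq> \<alpha> j" if "0 < s" "s \<le> j - 1" for s
  proof -
    have sn: "s \<in> {1..n}" using that j by auto
    show ?thesis using alpha_inj[OF sn jn] alpha_inj[OF sn un(1)] un(2) that prems(3) by auto
  qed
  show ?case
  proof (cases "(u, \<alpha> j) \<in> elim_seq E \<alpha> (j-1)")
    case True
    then show ?thesis using prems by blast
  next
    case notin: False
    from SUP[OF prems(1)] show ?thesis
    proof
      assume "(u, \<alpha> j) \<in> E"
      then have "(u, \<alpha> j) \<in> elim_seq E \<alpha> 0" by simp
      from persist[OF this, of "j-1"] avoid have "(u, \<alpha> j) \<in> elim_seq E \<alpha> (j-1)" by auto
      with notin show ?thesis by blast
    next
      assume "\<exists>i\<in>{1..n-1}. (u, \<alpha> j) \<in> fill_step E \<alpha> i \<and> (u, \<alpha> i) \<in> R \<and> (\<alpha> i, \<alpha> j) \<in> R"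
      then obtain i where i: "i \<in> {1..n-1}" "(u, \<alpha> j) \<in> fill_step E \<alpha> i"
        "(u, \<alpha> i) \<in> R" "(\<alpha> i, \<alpha> j) \<in> R" by blast
      have "\<not> i < j"
      proof
        assume ij: "i < j"
        have "(u, \<alpha> j) \<in> elim_seq E \<alpha> i" using i fill_step_sub by fastforce
        from persist[OF this, of "j-1"] avoid ij have "(u, \<alpha> j) \<in> elim_seq E \<alpha> (j-1)" by auto
        with notin show False by blast
      qed
      moreover have "i \<noteq> j" using i(4) noloop by auto
      ultimately have ij: "j < i" by auto
      have inn: "i \<in> {1..n}" using i(1) by auto
      have ai: "\<alpha> i \<in> X" "idx (\<alpha> i) = i" using alpha_in[OF inn] idx_alpha[OF inn] by auto
      have uai: "(u, \<alpha> i) \<in> Rm (Suc j)"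
        using i(3) ai ij prems unfolding Rm_def V_def by auto
      then have "(\<alpha> i, u) \<in> (Rm (Suc j))\<inverse>" by simp
      from IH[OF this i(4) ai(1)] ai ij obtain u' where
        u': "(u', \<alpha> j) \<in> R" "(u', \<alpha> j) \<in> elim_seq E \<alpha> (j-1)" "(\<alpha> i, u') \<in> (Rm (Suc j))\<^sup>*"
        by auto
      then show ?thesis using uai by (meson converse_rtrancl_into_rtrancl)
    qed
  qed
qed

lemma decompA:
  assumes j: "1 \<le> j" "j \<le> n"
  shows "(a,b) \<in> (Rm j)\<^sup>* \<Longrightarrow> a \<noteq> \<alpha> j \<Longrightarrow>
    (a,b) \<in> (Rm (Suc j))\<^sup>* \<or> (\<exists>u. (a,u) \<in> (Rm (Suc j))\<^sup>* \<and> (u, \<alpha> j) \<in> R \<and> u \<in> V (Suc j))"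
proof (induction rule: rtrancl_induct)
  case base
  then show ?case by simp
next
  case (step c b)
  have jn: "j \<in> {1..n}" using j by auto
  have vV: "\<alpha> j \<notin> V (Suc j)" using idx_alpha[OF jn] unfolding V_def by auto
  have Vsplit: "p \<in> V j \<Longrightarrow> p \<noteq> \<alpha> j \<Longrightarrow> p \<in> V (Suc j)" for p
    using idx_in[of p] unfolding V_def
    by (metis (mono_tags, lifting) Suc_leI le_neq_implies_less mem_Collect_eq)
  from step.IH[OF step.prems] show ?case
  proof
    assume ac: "(a,c) \<in> (Rm (Suc j))\<^sup>*"
    have "c \<noteq> \<alpha> j"
    proof
      assume "c = \<alpha> j"
      then have "(a, \<alpha> j) \<in> (Rm (Suc j))\<^sup>+" using ac step.prems
        by (metis rtranclD)
      then have "\<alpha> j \<in> V (Suc j)" by (induction rule: trancl_induct) (auto simp: Rm_def)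
      with vV show False by blast
    qed
    show ?thesis
    proof (cases "(c,b) \<in> Rm (Suc j)")
      case True
      then show ?thesis using ac by auto
    next
      case False
      have cb: "(c,b) \<in> R" "c \<in> V j" "b \<in> V j" using step.hyps(2) unfolding Rm_def by auto
      have cV: "c \<in> V (Suc j)" using Vsplit[OF cb(2) \<open>c \<noteq> \<alpha> j\<close>] .
      have "b = \<alpha> j" using False cb cV Vsplit unfolding Rm_def by blast
      then show ?thesis using ac cb cV by blast
    qed
  next
    assume "\<exists>u. (a,u) \<in> (Rm (Suc j))\<^sup>* \<and> (u, \<alpha> j) \<in> R \<and> u \<in> V (Suc j)"
    then show ?thesis by blast
  qed
qed

lemma decompB:
  assumes j: "1 \<le> j" "j \<le> n"
  shows "(a,b) \<in> (Rm j)\<^sup>+ \<Longrightarrow>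
    (a,b) \<in> (Rm (Suc j))\<^sup>+ \<or> ((a, \<alpha> j) \<in> (Rm j)\<^sup>* \<and> (\<alpha> j, b) \<in> (Rm j)\<^sup>*)"
proof (induction rule: trancl_induct)
  have Vsplit: "p \<in> V j \<Longrightarrow> p \<noteq> \<alpha> j \<Longrightarrow> p \<in> V (Suc j)" for p
    using idx_in[of p] unfolding V_def
    by (metis (mono_tags, lifting) Suc_leI le_neq_implies_less mem_Collect_eq)
  {
  case (base b)
  show ?case
  proof (cases "(a,b) \<in> Rm (Suc j)")
    case True then show ?thesis by auto
  next
    case False
    then have "a = \<alpha> j \<or> b = \<alpha> j" using base Vsplit unfolding Rm_def by blast
    then show ?thesis using base by auto
  qed
  next
  case (step c b)
  from step.IH show ?case
  proof
    assume ac: "(a,c) \<in> (Rm (Suc j))\<^sup>+"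
    show ?thesis
    proof (cases "(c,b) \<in> Rm (Suc j)")
      case True then show ?thesis using ac by (meson trancl_into_trancl)
    next
      case False
      then have "c = \<alpha> j \<or> b = \<alpha> j" using step.hyps(2) Vsplit unfolding Rm_def by blast
      moreover have "(a,c) \<in> (Rm j)\<^sup>*" using step.hyps(1) by auto
      ultimately show ?thesis using step.hyps(2) by auto
    qed
  next
    assume "(a, \<alpha> j) \<in> (Rm j)\<^sup>* \<and> (\<alpha> j, c) \<in> (Rm j)\<^sup>*"
    then show ?thesis using step.hyps(2) by (meson rtrancl.rtrancl_into_rtrancl)
  qed
  }
qed

lemma Rm_rtrancl_V': "(a,b) \<in> (Rm m)\<^sup>* \<Longrightarrow> b \<in> V m \<Longrightarrow> a \<in> V m"
  by (induction rule: converse_rtrancl_induct) (auto simp: Rm_def)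

lemma step_acyclic:
  assumes j: "1 \<le> j" "j \<le> n - 1" and acT: "acyclic (Rm (Suc j))"
  shows "acyclic (Rm j)"
proof -
  have jn: "j \<in> {1..n}" and jn': "j \<le> n" using j by auto
  have vX: "\<alpha> j \<in> X" and idxv: "idx (\<alpha> j) = j" using alpha_in[OF jn] idx_alpha[OF jn] by auto
  have vV: "\<alpha> j \<notin> V (Suc j)" using idxv unfolding V_def by auto
  have Vsplit: "p \<in> V j \<Longrightarrow> p \<noteq> \<alpha> j \<Longrightarrow> p \<in> V (Suc j)" for p
    using idx_in[of p] unfolding V_def
    by (metis (mono_tags, lifting) Suc_leI le_neq_implies_less mem_Collect_eq)
  have vcyc: "(\<alpha> j, \<alpha> j) \<in> (Rm j)\<^sup>+" if x: "(x,x) \<in> (Rm j)\<^sup>+" for x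
  proof -
    from decompB[OF j(1) jn' x] acT have
      "(x, \<alpha> j) \<in> (Rm j)\<^sup>* \<and> (\<alpha> j, x) \<in> (Rm j)\<^sup>*"
      unfolding acyclic_def by blast
    then show ?thesis using x
      by (metis rtranclD rtrancl_trancl_trancl)
  qed
  show ?thesis unfolding acyclic_def
  proof (intro allI notI)
    fix x assume "(x,x) \<in> (Rm j)\<^sup>+"
    then have "(\<alpha> j, \<alpha> j) \<in> (Rm j)\<^sup>+" by (rule vcyc)
    then obtain w where vw: "(\<alpha> j, w) \<in> Rm j" and wv: "(w, \<alpha> j) \<in> (Rm j)\<^sup>*"
      by (meson tranclD)
    have wnv: "w \<noteq> \<alpha> j" using vw noloop unfolding Rm_def by auto
    have wV: "w \<in> V (Suc j)" using vw Vsplit[OF _ wnv] unfolding Rm_def by auto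
    have "\<exists>u. (w,u) \<in> (Rm (Suc j))\<^sup>* \<and> (u, \<alpha> j) \<in> R \<and> u \<in> V (Suc j)"
    proof -
      from decompA[OF j(1) jn' wv wnv] show ?thesis
      proof
        assume "(w, \<alpha> j) \<in> (Rm (Suc j))\<^sup>*"
        from Rm_rtrancl_V[OF this wV] vV show ?thesis by blast
      qed
    qed
    then obtain u where wu: "(w,u) \<in> (Rm (Suc j))\<^sup>*" and uv: "(u, \<alpha> j) \<in> R"
      and uV: "u \<in> V (Suc j)" by blast
    have wR: "(\<alpha> j, w) \<in> R" using vw unfolding Rm_def by auto
    have wX: "w \<in> X" "j < idx w" using wV unfolding V_def by auto
    have uX: "u \<in> X" "j < idx u" using uV unfolding V_def by auto
    obtain w' where w': "(\<alpha> j, w') \<in> R" "(\<alpha> j, w') \<in> elim_seq E \<alpha> (j-1)"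
      "(w', w) \<in> (Rm (Suc j))\<^sup>*"
      using unfold_out[OF j acT wR wX] by blast
    obtain u' where u': "(u', \<alpha> j) \<in> R" "(u', \<alpha> j) \<in> elim_seq E \<alpha> (j-1)"
      "(u, u') \<in> (Rm (Suc j))\<^sup>*"
      using unfold_in[OF j acT uv uX] by blast
    have w'V: "w' \<in> V (Suc j)" using Rm_rtrancl_V'[OF w'(3) wV] .
    have u'V: "u' \<in> V (Suc j)" using Rm_rtrancl_V[OF u'(3) uV] .
    have sub: "elim_seq E \<alpha> (j-1) \<subseteq> elim_arcs E \<alpha> n" using j by (intro elim_seq_arcs) auto
    show False
    proof (cases "u' = w'")
      case True
      then show False using C6[of u' "\<alpha> j"] u'(1) w'(1) u'(2) w'(2) sub by blast
    next
      case False
      have "(u', w') \<in> fill_step E \<alpha> j"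
        using False u'(2) w'(2) unfolding fill_step_def fill_in_def by auto
      then have "(u', w') \<in> R" using CL[of j u' w'] j u'(1) w'(1) by auto
      then have uw: "(u', w') \<in> Rm (Suc j)" using u'V w'V unfolding Rm_def by auto
      have "(w', u') \<in> (Rm (Suc j))\<^sup>*" using w'(3) wu u'(3) by (meson rtrancl_trans)
      then have "(w', w') \<in> (Rm (Suc j))\<^sup>+" using uw by (meson rtrancl_into_trancl1)
      then show False using acT unfolding acyclic_def by blast
    qed
  qed
qed

lemma all_acyclic: "1 \<le> m \<Longrightarrow> acyclic (Rm m)"
proof (induction "n - m" arbitrary: m)
  case 0
  have "Rm m = {}"
  proof (rule ccontr)
    assume "Rm m \<noteq> {}"
    then obtain a b where ab: "(a,b) \<in> R" "a \<in> V m" "b \<in> V m" unfolding Rm_def by auto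
    have "a \<in> X" "b \<in> X" "m \<le> idx a" "m \<le> idx b" using ab unfolding V_def by auto
    then have "idx a = n" "idx b = n" using idx_in 0 by fastforce+
    then have "a = b" using idx_in \<open>a \<in> X\<close> \<open>b \<in> X\<close> by metis
    then show False using ab noloop by blast
  qed
  then show ?case unfolding acyclic_def by simp
next
  case (Suc d)
  then have "acyclic (Rm (Suc m))" by auto
  then show ?case using step_acyclic[of m] Suc by auto
qed

lemma R_acyclic: "acyclic R"
proof -
  have "R = Rm 1" using R_sub idx_in unfolding Rm_def V_def by fastforce
  then show ?thesis using all_acyclic[of 1] by simp
qed
end


lemma supported_model_iff:
  "supported_model P I \<longleftrightarrow> is_model P I \<and> (\<forall>x\<in>I. \<exists>r\<in>P. body_sat I r \<and> head r = x)"
proof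
  assume H: "supported_model P I"
  then have m: "is_model P I" and eq: "I = head ` supporting_rules P I"
    by (auto simp: supported_model_def)
  have "\<forall>x\<in>I. \<exists>r\<in>P. body_sat I r \<and> head r = x"
  proof
    fix x assume "x \<in> I"
    then have "x \<in> head ` supporting_rules P I" using eq by simp
    then show "\<exists>r\<in>P. body_sat I r \<and> head r = x" unfolding supporting_rules_def by auto
  qed
  with m show "is_model P I \<and> (\<forall>x\<in>I. \<exists>r\<in>P. body_sat I r \<and> head r = x)" by simp
next
  assume H: "is_model P I \<and> (\<forall>x\<in>I. \<exists>r\<in>P. body_sat I r \<and> head r = x)"
  show "supported_model P I" unfolding supported_model_def
  proof (intro conjI)
    show "is_model P I" using H by simp
    show "I = head ` supporting_rules P I"
    proof
      show "I \<subseteq> head ` supporting_rules P I"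
      proof
        fix x assume "x \<in> I"
        then obtain r where r: "r \<in> P" "body_sat I r" "head r = x" using H by blast
        then have "r \<in> supporting_rules P I" using \<open>x \<in> I\<close> unfolding supporting_rules_def by auto
        then show "x \<in> head ` supporting_rules P I" using r(3) by blast
      qed
      show "head ` supporting_rules P I \<subseteq> I"
        using H unfolding supporting_rules_def is_model_def by auto
    qed
  qed
qed

inductive_set dcl :: "('x \<times> 'x) set \<Rightarrow> ('x \<times> 'x \<times> 'x) set \<Rightarrow> ('x \<times> 'x) set"
  for B F where
  base: "x \<in> B \<Longrightarrow> x \<in> dcl B F"
| step: "(p,v,q) \<in> F \<Longrightarrow> (p,v) \<in> dcl B F \<Longrightarrow> (v,q) \<in> dcl B F \<Longrightarrow> (p,q) \<in> dcl B F"

lemma dir_cd: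
  fixes X :: "'x set" and Acts :: "'a set" and pre add :: "'a \<Rightarrow> 'x set" and G :: "'x set"
    and \<alpha> :: "nat \<Rightarrow> 'x"
  assumes pa: "\<forall>a\<in>Acts. pre a \<subseteq> X \<and> add a \<subseteq> X" and GX: "G \<subseteq> X"
    and bij: "bij_betw \<alpha> {1..card X} X"
    and SN: "supported_model (P_c X Acts pre add G \<alpha>) N"
  shows "\<exists>M. supported_model (P_d X Acts pre add G \<alpha>) M \<and> {a\<in>Acts. Act a \<in> M} = {a\<in>Acts. Act a \<in> N}"
proof -
  define n where "n = card X"
  define E where "E = dep_graph Acts pre add"
  define P where "P = P_c X Acts pre add G \<alpha>"
  have finX: "finite X" using bij bij_betw_finite by blast
  from SN have model: "\<And>r. r \<in> P \<Longrightarrow> is_normal r \<Longrightarrow> body_sat N r \<Longrightarrow> head r \<in> N"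
    and supp: "\<And>x. x \<in> N \<Longrightarrow> \<exists>r\<in>P. body_sat N r \<and> head r = x"
    unfolding supported_model_iff is_model_def P_def by blast+
  have EX: "E \<subseteq> X \<times> X" using pa unfolding E_def dep_graph_def by auto
  have N1: "FAtom \<notin> N"
  proof
    assume "FAtom \<in> N"
    from supp[OF this] obtain r where "r \<in> P" "body_sat N r" "head r = FAtom" by blast
    then show False using \<open>FAtom \<in> N\<close>
      unfolding P_def P_c_def rules_C5_def rules_C6_def goal_rules_def Let_def by auto
  qed
  have N2: "((p,q) \<in> E \<and> Prop q \<in> N) \<or>
      (\<exists>i\<in>{1..n-1}. (p,q) \<in> fill_step E \<alpha> i \<and> Dep p (\<alpha> i) \<in> N \<and> Dep (\<alpha> i) q \<in> N)"
    if "Dep p q \<in> N" for p q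
  proof -
    from supp[OF that] obtain r where "r \<in> P" "body_sat N r" "head r = Dep p q" by blast
    then show ?thesis
      unfolding P_def P_c_def rules_C5_def rules_C6_def goal_rules_def Let_def E_def n_def
      by auto
  qed
  have N3: "Dep p q \<in> N"
    if "i \<in> {1..n-1}" "(p,q) \<in> fill_step E \<alpha> i" "Dep p (\<alpha> i) \<in> N" "Dep (\<alpha> i) q \<in> N" for i p q
  proof -
    have "Normal (Dep p q) {Dep p (\<alpha> i), Dep (\<alpha> i) q} {} \<in> P"
      using that unfolding P_def P_c_def rules_C5_def E_def n_def by blast
    from model[OF this] that show ?thesis by simp
  qed
  have N4: "False"
    if "p \<in> X" "q \<in> X" "(p,q) \<in> elim_arcs E \<alpha> n" "(q,p) \<in> elim_arcs E \<alpha> n"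
      "Dep p q \<in> N" "Dep q p \<in> N" for p q
  proof -
    have "Normal FAtom {Dep p q, Dep q p} {FAtom} \<in> P"
      using that unfolding P_def P_c_def rules_C6_def E_def n_def Let_def by blast
    from model[OF this] that N1 show ?thesis by simp
  qed
  have N5: "a \<in> Acts \<and> p \<in> add a \<and> (\<forall>q\<in>pre a. Dep p q \<in> N)" if "WS a p \<in> N" for a p
  proof -
    from supp[OF that] obtain r where "r \<in> P" "body_sat N r" "head r = WS a p" by blast
    then show ?thesis
      unfolding P_def P_c_def rules_C5_def rules_C6_def goal_rules_def Let_def
      by (auto simp: image_subset_iff)
  qed
  have N6: "Prop p \<in> N \<and> Act a \<in> N" if "a \<in> Acts" "p \<in> add a" "WS a p \<in> N" for a p
  proof -
    have "Normal (Prop p) {WS a p} {} \<in> P" "Normal (Act a) {WS a p} {} \<in> P"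
      using that unfolding P_def P_c_def by blast+
    from model[OF this(1)] model[OF this(2)] that show ?thesis by simp
  qed
  have N7: "\<exists>a. a \<in> Acts \<and> p \<in> add a \<and> WS a p \<in> N" if "Prop p \<in> N" for p
  proof -
    from supp[OF that] obtain r where "r \<in> P" "body_sat N r" "head r = Prop p" by blast
    then show ?thesis using that
      unfolding P_def P_c_def rules_C5_def rules_C6_def goal_rules_def Let_def by auto
  qed
  have N8: "\<exists>p. a \<in> Acts \<and> p \<in> add a \<and> WS a p \<in> N" if "Act a \<in> N" for a
  proof -
    from supp[OF that] obtain r where "r \<in> P" "body_sat N r" "head r = Act a" by blast
    then show ?thesis using that
      unfolding P_def P_c_def rules_C5_def rules_C6_def goal_rules_def Let_def by auto
  qed
  have N9: "Prop g \<in> N" if "g \<in> G" for g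
  proof (rule ccontr)
    assume "Prop g \<notin> N"
    have "Normal (Prop g) {} {Prop g} \<in> P"
      using that unfolding P_def P_c_def goal_rules_def by blast
    from model[OF this] \<open>Prop g \<notin> N\<close> show False by simp
  qed
  define R where "R = {(p,q). Dep p q \<in> N}"
  have RX: "R \<subseteq> X \<times> X"
  proof
    fix x assume "x \<in> R"
    then obtain p q where x: "x = (p,q)" and pq: "Dep p q \<in> N" unfolding R_def by auto
    from N2[OF pq] show "x \<in> X \<times> X"
    proof
      assume "(p,q) \<in> E \<and> Prop q \<in> N" then show ?thesis using EX x by auto
    next
      assume "\<exists>i\<in>{1..n-1}. (p,q) \<in> fill_step E \<alpha> i \<and> Dep p (\<alpha> i) \<in> N \<and> Dep (\<alpha> i) q \<in> N"
      then obtain i where "i \<in> {1..n-1}" "(p,q) \<in> fill_step E \<alpha> i" by blast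
      then have "(p,q) \<in> elim_seq E \<alpha> i" using fill_step_sub by fastforce
      then show ?thesis using elim_seq_sub[OF EX] x by blast
    qed
  qed
  have acR: "acyclic R"
  proof (rule R_acyclic[of \<alpha> n X E R])
    show "bij_betw \<alpha> {1..n} X" using bij n_def by simp
    show "E \<subseteq> X \<times> X" by (rule EX)
    show "False" if "(p,q) \<in> R" "(q,p) \<in> R" "(p,q) \<in> elim_arcs E \<alpha> n" "(q,p) \<in> elim_arcs E \<alpha> n" for p q
      using N4[of p q] that RX unfolding R_def by auto
    show "(p,q) \<in> R" if "i \<in> {1..n-1}" "(p,q) \<in> fill_step E \<alpha> i" "(p, \<alpha> i) \<in> R" "(\<alpha> i, q) \<in> R" for i p q
      using N3[of i p q] that unfolding R_def by auto
    show "(p,q) \<in> E \<or> (\<exists>i\<in>{1..n-1}. (p,q) \<in> fill_step E \<alpha> i \<and> (p, \<alpha> i) \<in> R \<and> (\<alpha> i, q) \<in> R)"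
      if "(p,q) \<in> R" for p q
      using N2[of p q] that unfolding R_def by auto
  qed
  have wfR: "wf (R\<inverse>)"
    by (rule finite_acyclic_wf_converse[OF finite_subset[OF RX] acR]) (simp add: finX)
  have LL: "\<forall>y. Dep x y \<in> N \<longrightarrow> Prop y \<in> N" for x
  proof (induction x rule: wf_induct_rule[OF wfR])
    case (1 x)
    show ?case
    proof (intro allI impI)
      fix y assume xy: "Dep x y \<in> N"
      from N2[OF xy] show "Prop y \<in> N"
      proof
        assume "(x,y) \<in> E \<and> Prop y \<in> N" then show ?thesis by simp
      next
        assume "\<exists>i\<in>{1..n-1}. (x,y) \<in> fill_step E \<alpha> i \<and> Dep x (\<alpha> i) \<in> N \<and> Dep (\<alpha> i) y \<in> N"
        then obtain i where i: "Dep x (\<alpha> i) \<in> N" "Dep (\<alpha> i) y \<in> N" by blast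
        have "(\<alpha> i, x) \<in> R\<inverse>" using i(1) unfolding R_def by simp
        from "1.IH"[OF this] i(2) show ?thesis by blast
      qed
    qed
  qed
  define B where "B = {(p,q). \<exists>a. WS a p \<in> N \<and> q \<in> pre a}"
  define F where "F = {(p, \<alpha> i, q) | i p q. i \<in> {1..n-1} \<and> (p,q) \<in> fill_step E \<alpha> i}"
  define D where "D = dcl B F"
  have DR0: "Dep (fst x) (snd x) \<in> N" if "x \<in> D" for x
    using that unfolding D_def
  proof (induction rule: dcl.induct)
    case (base x)
    then show ?case using N5 unfolding B_def by auto
  next
    case (step p v q)
    then show ?case using N3 unfolding F_def by auto
  qed
  have DR: "Dep p q \<in> N" if "(p,q) \<in> D" for p q using DR0[OF that] by simp
  define M where "M = {x \<in> N. \<forall>p q. x \<noteq> Dep p q} \<union> {Dep p q | p q. (p,q) \<in> D}"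
  have MP: "Prop p \<in> M \<longleftrightarrow> Prop p \<in> N" for p unfolding M_def by auto
  have MA: "Act a \<in> M \<longleftrightarrow> Act a \<in> N" for a unfolding M_def by auto
  have MW: "WS a p \<in> M \<longleftrightarrow> WS a p \<in> N" for a p unfolding M_def by auto
  have MF: "FAtom \<notin> M" using N1 unfolding M_def by auto
  have MD: "Dep p q \<in> M \<longleftrightarrow> (p,q) \<in> D" for p q unfolding M_def by auto
  have Dcl: "(p,q) \<in> D" if "i \<in> {1..n-1}" "(p,q) \<in> fill_step E \<alpha> i"
    "(p, \<alpha> i) \<in> D" "(\<alpha> i, q) \<in> D" for i p q
  proof -
    have "(p, \<alpha> i, q) \<in> F" using that unfolding F_def by blast
    from this that(3) that(4) show ?thesis unfolding D_def by (rule dcl.step)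
  qed
  have DB: "(p,q) \<in> D" if "WS a p \<in> N" "q \<in> pre a" for a p q
    unfolding D_def by (rule dcl.base) (use that in \<open>auto simp: B_def\<close>)
  let ?Pd = "P_d X Acts pre add G \<alpha>"
  have mod: "head r \<in> M" if r: "r \<in> ?Pd" and nr: "is_normal r" and bs: "body_sat M r" for r
  proof -
    have c5: ?thesis if "r \<in> rules_C5 X Acts pre add \<alpha>"
    proof -
      from that obtain i p q where rr: "r = Normal (Dep p q) {Dep p (\<alpha> i), Dep (\<alpha> i) q} {}"
        "i \<in> {1..n - 1}" "(p,q) \<in> fill_step E \<alpha> i"
        unfolding rules_C5_def E_def n_def by blast
      then show ?thesis using bs Dcl[of i p q] MD by auto
    qed
    have c6: ?thesis if "r \<in> rules_C6 X Acts pre add \<alpha>"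
    proof -
      from that obtain p q where rr: "r = Normal FAtom {Dep p q, Dep q p} {FAtom}"
        "p \<in> X" "q \<in> X" "(p,q) \<in> elim_arcs E \<alpha> n" "(q,p) \<in> elim_arcs E \<alpha> n"
        unfolding rules_C6_def E_def n_def Let_def by blast
      then show ?thesis using bs N4[of p q] MD DR by auto
    qed
    have d3: ?thesis if "r \<in> {Normal FAtom {Prop p} ({WS a p | a. a \<in> Acts \<and> p \<in> add a} \<union> {FAtom}) | p. p \<in> X}"
    proof -
      from that obtain p where rr: "r = Normal FAtom {Prop p} ({WS a p | a. a \<in> Acts \<and> p \<in> add a} \<union> {FAtom})"
        by blast
      with bs have "Prop p \<in> N" "\<forall>a. a \<in> Acts \<and> p \<in> add a \<longrightarrow> WS a p \<notin> M" using MP by auto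
      then show ?thesis using N7 MW by blast
    qed
    have d4: ?thesis if "r \<in> {Normal (Dep p q) {WS a p} {} | a p q. a \<in> Acts \<and> p \<in> add a \<and> q \<in> pre a}"
    proof -
      from that obtain a p q where rr: "r = Normal (Dep p q) {WS a p} {}" "q \<in> pre a" by blast
      then show ?thesis using bs MW MD DB by auto
    qed
    have d5: ?thesis if "r \<in> {Normal (Prop q) {Dep p q} {} | p q. (p,q) \<in> dep_graph Acts pre add}"
    proof -
      from that obtain p q where rr: "r = Normal (Prop q) {Dep p q} {}" by blast
      then have "Dep p q \<in> N" using bs MD DR by auto
      then show ?thesis using rr LL MP by auto
    qed
    have d6: ?thesis if "r \<in> {Normal (Act a) {WS a p} {} | a p. a \<in> Acts \<and> p \<in> add a}"
    proof -
      from that obtain a p where rr: "r = Normal (Act a) {WS a p} {}" "a \<in> Acts" "p \<in> add a" by blast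
      then show ?thesis using bs MW MA N6 by auto
    qed
    have d7: ?thesis if "r \<in> goal_rules G"
    proof -
      from that obtain g where rr: "r = Normal (Prop g) {} {Prop g}" "g \<in> G"
        unfolding goal_rules_def by blast
      then show ?thesis using bs N9 MP by auto
    qed
    from r show ?thesis unfolding P_d_def
    proof (elim UnE)
    qed (use c5 c6 d3 d4 d5 d6 d7 nr in auto)
  qed
  have sup: "\<exists>r\<in>?Pd. body_sat M r \<and> head r = x" if x: "x \<in> M" for x
  proof (cases x)
    case (Prop p)
    then obtain a where "a \<in> Acts" "p \<in> add a" using N7 MP x by blast
    then have "p \<in> X" using pa by auto
    then have "Choice (Prop p) {} {} \<in> ?Pd" unfolding P_d_def by blast
    then show ?thesis using Prop by force
  next
    case (Act a)
    then obtain p where "a \<in> Acts" "p \<in> add a" "WS a p \<in> N" using N8 MA x by blast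
    then have "Normal (Act a) {WS a p} {} \<in> ?Pd" "WS a p \<in> M" unfolding P_d_def using MW by blast+
    then show ?thesis using Act by force
  next
    case (Dep p q)
    then have "(p,q) \<in> dcl B F" using x MD unfolding D_def by simp
    then show ?thesis
    proof (cases rule: dcl.cases)
      case base
      then obtain a where a: "WS a p \<in> N" "q \<in> pre a" unfolding B_def by blast
      then have "a \<in> Acts" "p \<in> add a" using N5 by auto
      then have "Normal (Dep p q) {WS a p} {} \<in> ?Pd" "WS a p \<in> M" unfolding P_d_def using a MW by blast+
      then show ?thesis using Dep by force
    next
      case (step v)
      then obtain i where i: "v = \<alpha> i" "i \<in> {1..n-1}" "(p,q) \<in> fill_step E \<alpha> i" unfolding F_def by blast
      then have "Normal (Dep p q) {Dep p (\<alpha> i), Dep (\<alpha> i) q} {} \<in> ?Pd"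
        unfolding P_d_def rules_C5_def E_def n_def by blast
      moreover have "Dep p (\<alpha> i) \<in> M" "Dep (\<alpha> i) q \<in> M" using step i MD unfolding D_def by auto
      ultimately show ?thesis using Dep by force
    qed
  next
    case (WS a p)
    then have "a \<in> Acts" "p \<in> add a" "Prop p \<in> N" using N5 N6 MW x by blast+
    then have "Choice (WS a p) {Prop p} {} \<in> ?Pd" "Prop p \<in> M" unfolding P_d_def using MP by blast+
    then show ?thesis using WS by force
  next
    case FAtom
    then show ?thesis using x MF by simp
  qed
  have "supported_model (P_d X Acts pre add G \<alpha>) M"
    unfolding supported_model_iff is_model_def using mod sup by blast
  moreover have "{a\<in>Acts. Act a \<in> M} = {a\<in>Acts. Act a \<in> N}" using MA by auto
  ultimately show ?thesis by blast
qed


lemma dir_dc: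
  fixes X :: "'x set" and Acts :: "'a set" and pre add :: "'a \<Rightarrow> 'x set" and G :: "'x set"
    and \<alpha> :: "nat \<Rightarrow> 'x"
  assumes pa: "\<forall>a\<in>Acts. pre a \<subseteq> X \<and> add a \<subseteq> X"
    and SM: "supported_model (P_d X Acts pre add G \<alpha>) M"
  shows "supported_model (P_c X Acts pre add G \<alpha>) M"
proof -
  define P where "P = P_d X Acts pre add G \<alpha>"
  let ?Pc = "P_c X Acts pre add G \<alpha>"
  from SM have model: "\<And>r. r \<in> P \<Longrightarrow> is_normal r \<Longrightarrow> body_sat M r \<Longrightarrow> head r \<in> M"
    and supp: "\<And>x. x \<in> M \<Longrightarrow> \<exists>r\<in>P. body_sat M r \<and> head r = x"
    unfolding supported_model_iff is_model_def P_def by blast+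
  have M1: "FAtom \<notin> M"
  proof
    assume "FAtom \<in> M"
    from supp[OF this] obtain r where "r \<in> P" "body_sat M r" "head r = FAtom" by blast
    then show False using \<open>FAtom \<in> M\<close>
      unfolding P_def P_d_def rules_C5_def rules_C6_def goal_rules_def Let_def by auto
  qed
  have M2: "p \<in> X" if "Prop p \<in> M" for p
  proof -
    from supp[OF that] obtain r where "r \<in> P" "body_sat M r" "head r = Prop p" by blast
    moreover have preX: "\<And>a q. a \<in> Acts \<Longrightarrow> q \<in> pre a \<Longrightarrow> q \<in> X" using pa by auto
    ultimately show ?thesis using that
      unfolding P_def P_d_def rules_C5_def rules_C6_def goal_rules_def Let_def dep_graph_def
      by auto
  qed
  have M3: "\<exists>a. a \<in> Acts \<and> p \<in> add a \<and> WS a p \<in> M" if "Prop p \<in> M" for p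
  proof (rule ccontr)
    assume nex: "\<not> ?thesis"
    have "Normal FAtom {Prop p} ({WS a p | a. a \<in> Acts \<and> p \<in> add a} \<union> {FAtom}) \<in> P"
      using M2[OF that] unfolding P_def P_d_def by blast
    from model[OF this] nex that M1 show False by auto
  qed
  have M4: "a \<in> Acts \<and> p \<in> add a \<and> Prop p \<in> M" if "WS a p \<in> M" for a p
  proof -
    from supp[OF that] obtain r where "r \<in> P" "body_sat M r" "head r = WS a p" by blast
    then show ?thesis
      unfolding P_def P_d_def rules_C5_def rules_C6_def goal_rules_def Let_def by auto
  qed
  have M5: "Dep p q \<in> M" if "WS a p \<in> M" "q \<in> pre a" for a p q
  proof -
    have "Normal (Dep p q) {WS a p} {} \<in> P" using M4[OF that(1)] that(2) unfolding P_def P_d_def by blast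
    from model[OF this] that show ?thesis by simp
  qed
  have M6: "Prop q \<in> M" if "Dep p q \<in> M" "(p,q) \<in> dep_graph Acts pre add" for p q
  proof -
    have "Normal (Prop q) {Dep p q} {} \<in> P" using that(2) unfolding P_def P_d_def by blast
    from model[OF this] that show ?thesis by simp
  qed
  have M8: "\<exists>p. a \<in> Acts \<and> p \<in> add a \<and> WS a p \<in> M" if "Act a \<in> M" for a
  proof -
    from supp[OF that] obtain r where "r \<in> P" "body_sat M r" "head r = Act a" by blast
    then show ?thesis
      unfolding P_def P_d_def rules_C5_def rules_C6_def goal_rules_def Let_def by auto
  qed
  have M7: "r \<in> rules_C5 X Acts pre add \<alpha> \<or>
      (\<exists>a. a \<in> Acts \<and> p \<in> add a \<and> q \<in> pre a \<and> r = Normal (Dep p q) {WS a p} {})"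
    if "r \<in> P" "head r = Dep p q" for r p q
    using that unfolding P_def P_d_def rules_C6_def goal_rules_def Let_def by auto
  have mod: "head r \<in> M" if r: "r \<in> ?Pc" and nr: "is_normal r" and bs: "body_sat M r" for r
  proof -
    have inP: ?thesis if "r \<in> P" using model nr bs that by blast
    from r show ?thesis unfolding P_c_def
    proof (elim UnE)
      assume "r \<in> rules_C5 X Acts pre add \<alpha>" then show ?thesis using inP unfolding P_def P_d_def by blast
    next
      assume "r \<in> rules_C6 X Acts pre add \<alpha>" then show ?thesis using inP unfolding P_def P_d_def by blast
    next
      assume "r \<in> {Choice (Dep p q) {Prop q} {} | p q. (p,q) \<in> dep_graph Acts pre add}"
      then show ?thesis using nr by auto
    next
      assume "r \<in> {Choice (WS a p) (Dep p ` pre a) {} | a p. a \<in> Acts \<and> p \<in> add a}"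
      then show ?thesis using nr by auto
    next
      assume "r \<in> {Normal (Prop p) {WS a p} {} | a p. a \<in> Acts \<and> p \<in> add a}"
      then obtain a p where "r = Normal (Prop p) {WS a p} {}" by blast
      then show ?thesis using bs M4 by auto
    next
      assume "r \<in> {Normal (Act a) {WS a p} {} | a p. a \<in> Acts \<and> p \<in> add a}"
      then show ?thesis using inP unfolding P_def P_d_def by blast
    next
      assume "r \<in> goal_rules G" then show ?thesis using inP unfolding P_def P_d_def by blast
    qed
  qed
  have sup: "\<exists>r\<in>?Pc. body_sat M r \<and> head r = x" if x: "x \<in> M" for x
  proof (cases x)
    case (Prop p)
    then obtain a where "a \<in> Acts" "p \<in> add a" "WS a p \<in> M" using M3 x by blast
    then have "Normal (Prop p) {WS a p} {} \<in> ?Pc" unfolding P_c_def by blast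
    then show ?thesis using Prop \<open>WS a p \<in> M\<close> by force
  next
    case (Act a)
    then obtain p where "a \<in> Acts" "p \<in> add a" "WS a p \<in> M" using M8 x by blast
    then have "Normal (Act a) {WS a p} {} \<in> ?Pc" unfolding P_c_def by blast
    then show ?thesis using Act \<open>WS a p \<in> M\<close> by force
  next
    case (Dep p q)
    from supp[OF x] obtain r where r: "r \<in> P" "body_sat M r" "head r = Dep p q" using Dep by blast
    from M7[OF r(1) r(3)] show ?thesis
    proof
      assume "r \<in> rules_C5 X Acts pre add \<alpha>"
      then have "r \<in> ?Pc" unfolding P_c_def by blast
      then show ?thesis using r Dep by blast
    next
      assume "\<exists>a. a \<in> Acts \<and> p \<in> add a \<and> q \<in> pre a \<and> r = Normal (Dep p q) {WS a p} {}"
      then obtain a where a: "a \<in> Acts" "p \<in> add a" "q \<in> pre a" "r = Normal (Dep p q) {WS a p} {}"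
        by blast
      have E: "(p,q) \<in> dep_graph Acts pre add" using a unfolding dep_graph_def by blast
      have "Prop q \<in> M" using M6[OF _ E] x Dep by simp
      moreover have "Choice (Dep p q) {Prop q} {} \<in> ?Pc" using E unfolding P_c_def by blast
      ultimately show ?thesis using Dep by force
    qed
  next
    case (WS a p)
    then have a: "a \<in> Acts" "p \<in> add a" using M4 x by auto
    then have "Choice (WS a p) (Dep p ` pre a) {} \<in> ?Pc" unfolding P_c_def by blast
    moreover have "Dep p ` pre a \<subseteq> M" using M5 x WS by blast
    ultimately show ?thesis using WS
      by (intro bexI[of _ "Choice (WS a p) (Dep p ` pre a) {}"]) auto
  next
    case FAtom
    then show ?thesis using x M1 by simp
  qed
  show ?thesis unfolding supported_model_iff is_model_def using mod sup by blast
qed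


theorem theorem3:
  fixes X :: "'x set" and Acts :: "'a set"
    and pre add :: "'a \<Rightarrow> 'x set" and G :: "'x set"
    and \<alpha> :: "nat \<Rightarrow> 'x" and A' :: "'a set"
  assumes "finite X" and "finite Acts"
    and "\<forall>a\<in>Acts. pre a \<subseteq> X \<and> add a \<subseteq> X"
    and "G \<subseteq> X"
    and "bij_betw \<alpha> {1..card X} X"
    and "A' \<subseteq> Acts"
  shows "(\<exists>M. supported_model (P_d X Acts pre add G \<alpha>) M \<and> A' = {a\<in>Acts. Act a \<in> M})
     \<longleftrightarrow> (\<exists>N. supported_model (P_c X Acts pre add G \<alpha>) N \<and> A' = {a\<in>Acts. Act a \<in> N})"
proof
  assume "\<exists>M. supported_model (P_d X Acts pre add G \<alpha>) M \<and> A' = {a\<in>Acts. Act a \<in> M}"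
  then obtain M where M: "supported_model (P_d X Acts pre add G \<alpha>) M" "A' = {a\<in>Acts. Act a \<in> M}"
    by blast
  have "supported_model (P_c X Acts pre add G \<alpha>) M" using dir_dc[OF assms(3) M(1)] .
  then show "\<exists>N. supported_model (P_c X Acts pre add G \<alpha>) N \<and> A' = {a\<in>Acts. Act a \<in> N}"
    using M(2) by blast
next
  assume "\<exists>N. supported_model (P_c X Acts pre add G \<alpha>) N \<and> A' = {a\<in>Acts. Act a \<in> N}"
  then obtain N where N: "supported_model (P_c X Acts pre add G \<alpha>) N" "A' = {a\<in>Acts. Act a \<in> N}"
    by blast
  from dir_cd[OF assms(3) assms(4) assms(5) N(1)] obtain M where
    "supported_model (P_d X Acts pre add G \<alpha>) M" "{a\<in>Acts. Act a \<in> M} = {a\<in>Acts. Act a \<in> N}"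
    by blast
  then show "\<exists>M. supported_model (P_d X Acts pre add G \<alpha>) M \<and> A' = {a\<in>Acts. Act a \<in> M}"
    using N(2) by auto
qed

end
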